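(* Let $\overrightarrow{W}$ be a Morse sequence on a simplicial complex $K$. Then for every $p$, $\widehat{\partial}_p\circ\widehat{\partial}_{p+1}=0$ and $\widehat{\delta}_{p+1}\circ\widehat{\delta}_p=0$.
   Context: A simplicial complex $K$ is a finite collection of non-empty finite sets closed under taking non-empty subsets; $\dim\sigma=|\sigma|-1$, $K^{(p)}$ the set of $p$-simplices. A pair $(\sigma,\tau)$ with $\sigma\subsetneq\tau$ is a free pair for $K$ if $\tau$ is the only simplex other than $\sigma$ containing $\sigma$; $K$ is then an elementary expansion of $K\setminus\{\sigma,\tau\}$. If $\nu$ is a facet (maximal simplex) of $K$, $K$ is an elementary filling of $K\setminus\{\nu\}$. A Morse sequence on $K$ is a sequence $\langle\emptyset=K_0,\dots,K_k=K\rangle$ with each $K_i$ an elementary expansion or filling of $K_{i-1}$; simplices added by fillings are critical; for an expansion $K_i=K_{i-1}\cup\{\sigma,\tau\}$, $\sigma\subset\tau$, $(\sigma,\tau)$ is a regular pair, $\sigma$ lower regular, $\tau$ upper regular. $\widehat W$ is the set of critical simplices. $K[p]$ is the $\mathbb{Z}_2$-vector space of subsets of $K^{(p)}$ (sum = symmetric difference, $0=\emptyset$), $\widehat W[p]=\{c\in K[p]:c\subseteq\widehat W\}$. For $\sigma\in K^{(p)}$, $\partial(\sigma)=\{\tau\in K^{(p-1)}:\tau\subset\sigma\}$, $\delta(\sigma)=\{\tau\in K^{(p+1)}:\sigma\subset\tau\}$, with linear extensions $\partial_p,\delta_p$. The reference map $\curlywedge$ is the unique map assigning to each $p$-simplex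 an element of $\widehat W[p]$, extended linearly, with $\curlywedge(\nu)=\{\nu\}$ for critical $\nu$ and $\curlywedge(\tau)=0=\curlywedge(\partial(\tau))$ for upper regular $\tau$; the coreference map $\curlyvee$ is the unique such map with $\curlyvee(\nu)=\{\nu\}$ for critical $\nu$ and $\curlyvee(\sigma)=0=\curlyvee(\delta(\sigma))$ for lower regular $\sigma$. The linear maps $\widehat\partial_p:\widehat W[p]\to\widehat W[p-1]$ and $\widehat\delta_p:\widehat W[p]\to\widehat W[p+1]$ are $\widehat\partial_p(c)=\curlywedge(\partial_p(c))$, $\widehat\delta_p(c)=\curlyvee(\delta_p(c))$. *)

theory Defs
  imports Main
begin

text \<open>Simplices are finite non-empty sets of vertices; a simplex of dimension p has p+1 vertices.
  Chains over Z2 are represented as sets of simplices (sum = symmetric difference).\<close>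

definition simplicial_complex :: "'v set set \<Rightarrow> bool" where
  "simplicial_complex K \<longleftrightarrow> finite K \<and> (\<forall>s\<in>K. finite s \<and> s \<noteq> {}) \<and>
     (\<forall>s\<in>K. \<forall>t. t \<subseteq> s \<and> t \<noteq> {} \<longrightarrow> t \<in> K)"

definition simplices_of_dim :: "'v set set \<Rightarrow> nat \<Rightarrow> 'v set set" where
  "simplices_of_dim K p = {s \<in> K. card s = p + 1}"

definition free_pair :: "'v set set \<Rightarrow> 'v set \<Rightarrow> 'v set \<Rightarrow> bool" where
  "free_pair K \<sigma> \<tau> \<longleftrightarrow> \<sigma> \<subset> \<tau> \<and> \<sigma> \<in> K \<and> \<tau> \<in> K \<and> (\<forall>\<rho>\<in>K. \<sigma> \<subseteq> \<rho> \<longrightarrow> \<rho> = \<sigma> \<or> \<rho> = \<tau>)"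

definition elem_expansion :: "'v set set \<Rightarrow> 'v set set \<Rightarrow> 'v set \<Rightarrow> 'v set \<Rightarrow> bool" where
  "elem_expansion K' K \<sigma> \<tau> \<longleftrightarrow> simplicial_complex K' \<and> free_pair K' \<sigma> \<tau> \<and> K = K' - {\<sigma>, \<tau>}"

definition elem_filling :: "'v set set \<Rightarrow> 'v set set \<Rightarrow> 'v set \<Rightarrow> bool" where
  "elem_filling K' K \<nu> \<longleftrightarrow> simplicial_complex K' \<and> \<nu> \<in> K' \<and> (\<forall>\<rho>\<in>K'. \<nu> \<subseteq> \<rho> \<longrightarrow> \<rho> = \<nu>) \<and> K = K' - {\<nu>}"

definition morse_sequence :: "'v set set \<Rightarrow> 'v set set list \<Rightarrow> bool" where
  "morse_sequence K Ks \<longleftrightarrow> Ks \<noteq> [] \<and> Ks ! 0 = {} \<and> last Ks = K \<and>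
     (\<forall>i. 0 < i \<and> i < length Ks \<longrightarrow>
        (\<exists>\<sigma> \<tau>. elem_expansion (Ks ! i) (Ks ! (i - 1)) \<sigma> \<tau>) \<or>
        (\<exists>\<nu>. elem_filling (Ks ! i) (Ks ! (i - 1)) \<nu>))"

definition critical :: "'v set set list \<Rightarrow> 'v set \<Rightarrow> bool" where
  "critical Ks \<nu> \<longleftrightarrow> (\<exists>i. 0 < i \<and> i < length Ks \<and> elem_filling (Ks ! i) (Ks ! (i - 1)) \<nu>)"

definition regular_pair :: "'v set set list \<Rightarrow> 'v set \<Rightarrow> 'v set \<Rightarrow> bool" where
  "regular_pair Ks \<sigma> \<tau> \<longleftrightarrow> (\<exists>i. 0 < i \<and> i < length Ks \<and> elem_expansion (Ks ! i) (Ks ! (i - 1)) \<sigma> \<tau>)"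

definition lower_regular :: "'v set set list \<Rightarrow> 'v set \<Rightarrow> bool" where
  "lower_regular Ks \<sigma> \<longleftrightarrow> (\<exists>\<tau>. regular_pair Ks \<sigma> \<tau>)"

definition upper_regular :: "'v set set list \<Rightarrow> 'v set \<Rightarrow> bool" where
  "upper_regular Ks \<tau> \<longleftrightarrow> (\<exists>\<sigma>. regular_pair Ks \<sigma> \<tau>)"

definition critical_set :: "'v set set list \<Rightarrow> 'v set set" where
  "critical_set Ks = {\<nu>. critical Ks \<nu>}"

definition crit_chains :: "'v set set \<Rightarrow> 'v set set list \<Rightarrow> nat \<Rightarrow> 'v set set set" where
  "crit_chains K Ks p = {c. c \<subseteq> simplices_of_dim K p \<and> c \<subseteq> critical_set Ks}"

text \<open>Z2-linear extension of a map from simplices to chains: the sum over sigma in c of f sigma.\<close>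
definition lin_ext :: "('v set \<Rightarrow> 'v set set) \<Rightarrow> 'v set set \<Rightarrow> 'v set set" where
  "lin_ext f c = {\<rho>. odd (card {\<sigma> \<in> c. \<rho> \<in> f \<sigma>})}"

definition bnd :: "'v set set \<Rightarrow> 'v set \<Rightarrow> 'v set set" where
  "bnd K \<sigma> = {\<tau> \<in> K. \<tau> \<subset> \<sigma> \<and> card \<tau> + 1 = card \<sigma>}"

definition cobnd :: "'v set set \<Rightarrow> 'v set \<Rightarrow> 'v set set" where
  "cobnd K \<sigma> = {\<tau> \<in> K. \<sigma> \<subset> \<tau> \<and> card \<tau> = card \<sigma> + 1}"

text \<open>Characterising properties of the reference / coreference maps (maps on simplices of K,
  set to 0 outside K so that uniqueness is meaningful).\<close>
definition is_reference_map :: "'v set set \<Rightarrow> 'v set set list \<Rightarrow> ('v set \<Rightarrow> 'v set set) \<Rightarrow> bool" where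
  "is_reference_map K Ks f \<longleftrightarrow>
     (\<forall>\<sigma>. \<sigma> \<notin> K \<longrightarrow> f \<sigma> = {}) \<and>
     (\<forall>\<sigma>\<in>K. f \<sigma> \<in> crit_chains K Ks (card \<sigma> - 1)) \<and>
     (\<forall>\<nu>\<in>K. critical Ks \<nu> \<longrightarrow> f \<nu> = {\<nu>}) \<and>
     (\<forall>\<tau>\<in>K. upper_regular Ks \<tau> \<longrightarrow> f \<tau> = {} \<and> lin_ext f (bnd K \<tau>) = {})"

definition is_coreference_map :: "'v set set \<Rightarrow> 'v set set list \<Rightarrow> ('v set \<Rightarrow> 'v set set) \<Rightarrow> bool" where
  "is_coreference_map K Ks f \<longleftrightarrow>
     (\<forall>\<sigma>. \<sigma> \<notin> K \<longrightarrow> f \<sigma> = {}) \<and>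
     (\<forall>\<sigma>\<in>K. f \<sigma> \<in> crit_chains K Ks (card \<sigma> - 1)) \<and>
     (\<forall>\<nu>\<in>K. critical Ks \<nu> \<longrightarrow> f \<nu> = {\<nu>}) \<and>
     (\<forall>\<sigma>\<in>K. lower_regular Ks \<sigma> \<longrightarrow> f \<sigma> = {} \<and> lin_ext f (cobnd K \<sigma>) = {})"

definition reference_map :: "'v set set \<Rightarrow> 'v set set list \<Rightarrow> 'v set \<Rightarrow> 'v set set" where
  "reference_map K Ks = (THE f. is_reference_map K Ks f)"

definition coreference_map :: "'v set set \<Rightarrow> 'v set set list \<Rightarrow> 'v set \<Rightarrow> 'v set set" where
  "coreference_map K Ks = (THE f. is_coreference_map K Ks f)"

text \<open>Morse boundary and coboundary on critical chains (the dimension index is implicit in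
  the domain \<open>crit_chains K Ks p\<close>).\<close>
definition morse_bnd :: "'v set set \<Rightarrow> 'v set set list \<Rightarrow> 'v set set \<Rightarrow> 'v set set" where
  "morse_bnd K Ks c = lin_ext (reference_map K Ks) (lin_ext (bnd K) c)"

definition morse_cobnd :: "'v set set \<Rightarrow> 'v set set list \<Rightarrow> 'v set set \<Rightarrow> 'v set set" where
  "morse_cobnd K Ks c = lin_ext (coreference_map K Ks) (lin_ext (cobnd K) c)"

end

theory Submission
  imports Defs
begin


abbreviation sd :: "'a set \<Rightarrow> 'a set \<Rightarrow> 'a set" where "sd A B \<equiv> (A - B) \<union> (B - A)"

lemma lin_ext_empty[simp]: "lin_ext f {} = {}" by (simp add: lin_ext_def)

lemma lin_ext_single[simp]: "lin_ext f {a} = f a"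
proof -
  have "\<And>\<rho>. {\<sigma> \<in> {a}. \<rho> \<in> f \<sigma>} = (if \<rho> \<in> f a then {a} else {})" by auto
  then show ?thesis by (auto simp: lin_ext_def)
qed

lemma lin_ext_sub: "lin_ext f c \<subseteq> \<Union>(f ` c)"
proof
  fix \<rho> assume "\<rho> \<in> lin_ext f c"
  then have "odd (card {\<sigma> \<in> c. \<rho> \<in> f \<sigma>})" by (auto simp: lin_ext_def)
  then have "card {\<sigma> \<in> c. \<rho> \<in> f \<sigma>} \<noteq> 0" by (metis even_zero)
  then have "{\<sigma> \<in> c. \<rho> \<in> f \<sigma>} \<noteq> {}" by (metis card.empty)
  then show "\<rho> \<in> \<Union>(f ` c)" by auto
qed

lemma lin_ext_finite: "finite c \<Longrightarrow> (\<And>x. x \<in> c \<Longrightarrow> finite (f x)) \<Longrightarrow> finite (lin_ext f c)"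
  by (meson finite_UN_I finite_subset lin_ext_sub)

lemma lin_ext_cong: "(\<And>x. x \<in> c \<Longrightarrow> f x = h x) \<Longrightarrow> lin_ext f c = lin_ext h c"
proof -
  assume a: "\<And>x. x \<in> c \<Longrightarrow> f x = h x"
  have "\<And>\<rho>. {\<sigma> \<in> c. \<rho> \<in> f \<sigma>} = {\<sigma> \<in> c. \<rho> \<in> h \<sigma>}" using a by auto
  then show ?thesis by (simp add: lin_ext_def)
qed

lemma lin_ext_zero: "(\<And>x. x \<in> c \<Longrightarrow> f x = {}) \<Longrightarrow> lin_ext f c = {}"
  using lin_ext_sub[of f c] by auto

lemma lin_ext_insert:
  assumes "finite c" "a \<notin> c"
  shows "lin_ext f (insert a c) = sd (f a) (lin_ext f c)"
proof (rule set_eqI)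
  fix \<rho>
  have e: "{\<sigma> \<in> insert a c. \<rho> \<in> f \<sigma>} = (if \<rho> \<in> f a then insert a {\<sigma>\<in>c. \<rho>\<in>f \<sigma>} else {\<sigma>\<in>c. \<rho>\<in>f \<sigma>})" by auto
  have "finite {\<sigma>\<in>c. \<rho>\<in>f \<sigma>}" "a \<notin> {\<sigma>\<in>c. \<rho>\<in>f \<sigma>}" using assms by auto
  then show "\<rho> \<in> lin_ext f (insert a c) \<longleftrightarrow> \<rho> \<in> sd (f a) (lin_ext f c)"
    unfolding lin_ext_def using e by auto
qed

lemma lin_ext_remove:
  assumes "finite c" "a \<in> c"
  shows "lin_ext f c = sd (f a) (lin_ext f (c - {a}))"
  using lin_ext_insert[of "c - {a}" a f] assms by (simp add: insert_absorb)

lemma parity_aux: "(i::nat) \<le> a \<Longrightarrow> i \<le> b \<Longrightarrow> odd ((a - i) + (b - i)) \<longleftrightarrow> (odd a \<noteq> odd b)"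
  by presburger

lemma lin_ext_sd:
  assumes "finite A" "finite B"
  shows "lin_ext f (sd A B) = sd (lin_ext f A) (lin_ext f B)"
proof (rule set_eqI)
  fix \<rho>
  define PA where "PA = {\<sigma>\<in>A. \<rho>\<in>f \<sigma>}"
  define PB where "PB = {\<sigma>\<in>B. \<rho>\<in>f \<sigma>}"
  have fin: "finite PA" "finite PB" using assms by (auto simp: PA_def PB_def)
  have e: "{\<sigma> \<in> sd A B. \<rho> \<in> f \<sigma>} = (PA - PB) \<union> (PB - PA)" by (auto simp: PA_def PB_def)
  have c: "card ((PA - PB) \<union> (PB - PA)) = (card PA - card (PA \<inter> PB)) + (card PB - card (PA \<inter> PB))"
  proof -
    have "card ((PA - PB) \<union> (PB - PA)) = card (PA - PB) + card (PB - PA)"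
      using fin by (intro card_Un_disjoint) auto
    moreover have "card (PA - PB) = card PA - card (PA \<inter> PB)" using fin by (simp add: card_Diff_subset_Int)
    moreover have "card (PB - PA) = card PB - card (PA \<inter> PB)" using fin by (simp add: card_Diff_subset_Int Int_commute)
    ultimately show ?thesis by simp
  qed
  have le: "card (PA \<inter> PB) \<le> card PA" "card (PA \<inter> PB) \<le> card PB"
    using fin by (auto intro: card_mono)
  have "odd (card {\<sigma> \<in> sd A B. \<rho> \<in> f \<sigma>}) \<longleftrightarrow> (odd (card PA) \<noteq> odd (card PB))"
    using e c parity_aux[OF le] by simp
  then show "\<rho> \<in> lin_ext f (sd A B) \<longleftrightarrow> \<rho> \<in> sd (lin_ext f A) (lin_ext f B)"
    unfolding lin_ext_def PA_def PB_def by auto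
qed

lemma lin_ext_comp:
  assumes "finite c" "\<And>x. x \<in> c \<Longrightarrow> finite (g x)"
  shows "lin_ext f (lin_ext g c) = lin_ext (\<lambda>x. lin_ext f (g x)) c"
  using assms
proof (induction c rule: finite_induct)
  case empty then show ?case by simp
next
  case (insert a c)
  have fl: "finite (lin_ext g c)" using insert by (intro lin_ext_finite) auto
  have "lin_ext f (lin_ext g (insert a c)) = lin_ext f (sd (g a) (lin_ext g c))"
    using insert by (simp add: lin_ext_insert)
  also have "\<dots> = sd (lin_ext f (g a)) (lin_ext f (lin_ext g c))"
    using fl insert by (intro lin_ext_sd) auto
  also have "\<dots> = sd (lin_ext f (g a)) (lin_ext (\<lambda>x. lin_ext f (g x)) c)"
    using insert by simp
  also have "\<dots> = lin_ext (\<lambda>x. lin_ext f (g x)) (insert a c)"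
    using insert by (simp add: lin_ext_insert)
  finally show ?case .
qed


locale mabs =
  fixes K :: "'v set set" and B :: "'v set \<Rightarrow> 'v set set" and crit :: "'v set \<Rightarrow> bool"
    and R :: "('v set \<times> 'v set) set" and lvl :: "'v set \<Rightarrow> nat" and g :: "'v set \<Rightarrow> nat"
  assumes finK: "finite K"
    and BK: "\<And>x. x \<in> K \<Longrightarrow> B x \<subseteq> K"
    and BB: "\<And>x. x \<in> K \<Longrightarrow> lin_ext B (B x) = {}"
    and cover: "\<And>x. x \<in> K \<Longrightarrow> crit x \<or> (\<exists>s. (x,s) \<in> R) \<or> (\<exists>z. (z,x) \<in> R)"
    and RK: "\<And>z s. (z,s) \<in> R \<Longrightarrow> z \<in> K \<and> s \<in> K"
    and Rs: "\<And>z s. (z,s) \<in> R \<Longrightarrow> s \<in> B z"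
    and Rlvl: "\<And>z s y. (z,s) \<in> R \<Longrightarrow> y \<in> B z \<Longrightarrow> y \<noteq> s \<Longrightarrow> lvl y < lvl s"
    and Rg: "\<And>z s y. (z,s) \<in> R \<Longrightarrow> y \<in> B z \<Longrightarrow> g y = g s"
    and Rcrit: "\<And>z s. (z,s) \<in> R \<Longrightarrow> \<not> crit z \<and> \<not> crit s"
    and Rneq: "\<And>z s. (z,s) \<in> R \<Longrightarrow> z \<noteq> s"
    and Runiq: "\<And>z s z' s'. (z,s) \<in> R \<Longrightarrow> (z',s') \<in> R \<Longrightarrow> z = z' \<or> s = s' \<or> z = s' \<or> s = z' \<Longrightarrow> z = z' \<and> s = s'"
begin

definition Ref :: "('v set \<Rightarrow> 'v set set) \<Rightarrow> bool" where
  "Ref f \<longleftrightarrow> (\<forall>x. x \<notin> K \<longrightarrow> f x = {}) \<and> (\<forall>x\<in>K. f x \<subseteq> {y\<in>K. crit y \<and> g y = g x}) \<and>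
     (\<forall>x\<in>K. crit x \<longrightarrow> f x = {x}) \<and> (\<forall>z\<in>K. (\<exists>s. (z,s) \<in> R) \<longrightarrow> f z = {} \<and> lin_ext f (B z) = {})"

lemma finB: "x \<in> K \<Longrightarrow> finite (B x)"
  using BK finK finite_subset by blast

lemma solved_eq:
  assumes "(z,s) \<in> R" "lin_ext f (B z) = {}"
  shows "f s = lin_ext f (B z - {s})"
proof -
  have "lin_ext f (B z) = sd (f s) (lin_ext f (B z - {s}))"
    using assms RK Rs finB by (intro lin_ext_remove) auto
  then show ?thesis using assms(2) by blast
qed

lemma ex_part:
  "\<exists>f. (\<forall>x. (x \<notin> K \<or> lvl x \<ge> n) \<longrightarrow> f x = {}) \<and> (\<forall>x\<in>K. f x \<subseteq> {y\<in>K. crit y \<and> g y = g x}) \<and>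
     (\<forall>x\<in>K. lvl x < n \<longrightarrow> crit x \<longrightarrow> f x = {x}) \<and> (\<forall>z s. (z,s) \<in> R \<longrightarrow> f z = {}) \<and>
     (\<forall>z s. (z,s) \<in> R \<longrightarrow> lvl s < n \<longrightarrow> lin_ext f (B z) = {})"
proof (induction n)
  case 0
  show ?case by (rule exI[of _ "\<lambda>_. {}"]) simp
next
  case (Suc n)
  from Suc.IH obtain f where P: "(\<forall>x. (x \<notin> K \<or> lvl x \<ge> n) \<longrightarrow> f x = {}) \<and> (\<forall>x\<in>K. f x \<subseteq> {y\<in>K. crit y \<and> g y = g x}) \<and>
     (\<forall>x\<in>K. lvl x < n \<longrightarrow> crit x \<longrightarrow> f x = {x}) \<and> (\<forall>z s. (z,s) \<in> R \<longrightarrow> f z = {}) \<and>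
     (\<forall>z s. (z,s) \<in> R \<longrightarrow> lvl s < n \<longrightarrow> lin_ext f (B z) = {})" by (elim exE)
  have f1: "\<And>x. (x \<notin> K \<or> lvl x \<ge> n) \<Longrightarrow> f x = {}" using P by simp
  have f2: "\<And>x. x\<in>K \<Longrightarrow> f x \<subseteq> {y\<in>K. crit y \<and> g y = g x}" using P by simp
  have f3: "\<And>x. x\<in>K \<Longrightarrow> lvl x < n \<Longrightarrow> crit x \<Longrightarrow> f x = {x}" using P by simp
  have f4: "\<And>z s. (z,s) \<in> R \<Longrightarrow> f z = {}" using P by blast
  have f5: "\<And>z s. (z,s) \<in> R \<Longrightarrow> lvl s < n \<Longrightarrow> lin_ext f (B z) = {}" using P by simp
  define f' where "f' x = (if x \<in> K \<and> lvl x = n then (if crit x then {x} else if (\<exists>z. (z,x) \<in> R)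
      then lin_ext f (B (THE z. (z,x) \<in> R) - {x}) else {}) else f x)" for x
  have sv: "f' s = lin_ext f (B z - {s})" if "(z,s) \<in> R" "lvl s = n" for z s
  proof -
    have "(THE z. (z,s) \<in> R) = z"
    proof (rule the_equality)
      show "(z,s) \<in> R" using that by simp
      fix z' assume "(z',s) \<in> R" then show "z' = z" using that(1) Runiq by blast
    qed
    then show ?thesis using that RK Rcrit unfolding f'_def by auto
  qed
  have agree: "f' y = f y" if "lvl y < n" for y using that unfolding f'_def by auto
  show ?case
  proof (intro exI[of _ f'] conjI allI ballI impI)
    fix x assume "x \<notin> K \<or> Suc n \<le> lvl x" then show "f' x = {}" using f1 unfolding f'_def by auto
  next
    fix x assume xK: "x \<in> K"
    show "f' x \<subseteq> {y\<in>K. crit y \<and> g y = g x}"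
    proof (cases "lvl x = n \<and> \<not> crit x \<and> (\<exists>z. (z,x) \<in> R)")
      case True
      then obtain z where z: "(z,x) \<in> R" by blast
      then have "f' x = lin_ext f (B z - {x})" using sv True by blast
      also have "\<dots> \<subseteq> \<Union>(f ` (B z - {x}))" by (rule lin_ext_sub)
      also have "\<dots> \<subseteq> {y\<in>K. crit y \<and> g y = g x}"
      proof
        fix y assume "y \<in> \<Union>(f ` (B z - {x}))"
        then obtain w where w: "w \<in> B z" "y \<in> f w" by auto
        have "w \<in> K" using w z BK RK by blast
        then show "y \<in> {y\<in>K. crit y \<and> g y = g x}" using f2[of w] w Rg[OF z w(1)] by auto
      qed
      finally show ?thesis .
    next
      case False
      then show ?thesis using f2[OF xK] xK unfolding f'_def by auto
    qed
  next
    fix x assume "x \<in> K" "lvl x < Suc n" "crit x"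
    then show "f' x = {x}" using f3 unfolding f'_def by auto
  next
    fix z s assume zs: "(z,s) \<in> R"
    have "\<not> (\<exists>z'. (z',z) \<in> R)" using zs Runiq Rneq by blast
    then show "f' z = {}" using zs Rcrit f4 unfolding f'_def by auto
  next
    fix z s assume zs: "(z,s) \<in> R" and l: "lvl s < Suc n"
    have lt: "lvl y < lvl s" if "y \<in> B z - {s}" for y using Rlvl zs that by blast
    show "lin_ext f' (B z) = {}"
    proof (cases "lvl s < n")
      case True
      have "lin_ext f' (B z) = lin_ext f (B z)"
      proof (rule lin_ext_cong)
        fix y assume y: "y \<in> B z"
        have "lvl y < n"
        proof (cases "y = s")
          case True then show ?thesis using \<open>lvl s < n\<close> by simp
        next
          case False then show ?thesis using lt[of y] y \<open>lvl s < n\<close> by simp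
        qed
        then show "f' y = f y" by (rule agree)
      qed
      then show ?thesis using f5 zs True by simp
    next
      case False
      then have ln: "lvl s = n" using l by simp
      have "lin_ext f' (B z) = sd (f' s) (lin_ext f' (B z - {s}))"
        using zs RK Rs finB by (intro lin_ext_remove) auto
      also have "lin_ext f' (B z - {s}) = lin_ext f (B z - {s})"
        apply (rule lin_ext_cong) using lt ln agree by auto
      finally show ?thesis using sv[OF zs ln] by simp
    qed
  qed
qed

lemma Ref_ex: "\<exists>f. Ref f"
proof -
  define n where "n = Suc (Max (lvl ` K))"
  have lt: "lvl x < n" if "x \<in> K" for x
    using that finK unfolding n_def by (simp add: le_imp_less_Suc)
  from ex_part[of n] obtain f where P: "(\<forall>x. (x \<notin> K \<or> lvl x \<ge> n) \<longrightarrow> f x = {}) \<and> (\<forall>x\<in>K. f x \<subseteq> {y\<in>K. crit y \<and> g y = g x}) \<and>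
     (\<forall>x\<in>K. lvl x < n \<longrightarrow> crit x \<longrightarrow> f x = {x}) \<and> (\<forall>z s. (z,s) \<in> R \<longrightarrow> f z = {}) \<and>
     (\<forall>z s. (z,s) \<in> R \<longrightarrow> lvl s < n \<longrightarrow> lin_ext f (B z) = {})" by (elim exE)
  note P1 = P[THEN conjunct1] and P2 = P[THEN conjunct2, THEN conjunct1]
    and P3 = P[THEN conjunct2, THEN conjunct2, THEN conjunct1]
    and P4 = P[THEN conjunct2, THEN conjunct2, THEN conjunct2, THEN conjunct1]
    and P5 = P[THEN conjunct2, THEN conjunct2, THEN conjunct2, THEN conjunct2]
  have "Ref f" unfolding Ref_def
  proof (intro conjI allI ballI impI)
    fix x assume "x \<notin> K" then show "f x = {}" using P1 by simp
  next
    fix x assume "x \<in> K" then show "f x \<subseteq> {y\<in>K. crit y \<and> g y = g x}" using P2 by simp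
  next
    fix x assume "x \<in> K" "crit x" then show "f x = {x}" using P3 lt by simp
  next
    fix z assume "z \<in> K" "\<exists>s. (z,s) \<in> R"
    then obtain s where zs: "(z,s) \<in> R" by (elim exE)
    show "f z = {}" using P4 zs by blast
    have "s \<in> K" using RK zs by simp
    then show "lin_ext f (B z) = {}" using P5 zs lt by simp
  qed
  then show ?thesis by blast
qed

lemma Ref_D1: "Ref f \<Longrightarrow> \<forall>x. x \<notin> K \<longrightarrow> f x = {}"
  unfolding Ref_def by (elim conjE) assumption
lemma Ref_D2: "Ref f \<Longrightarrow> \<forall>x\<in>K. f x \<subseteq> {y\<in>K. crit y \<and> g y = g x}"
  unfolding Ref_def by (elim conjE) assumption
lemma Ref_D3: "Ref f \<Longrightarrow> \<forall>x\<in>K. crit x \<longrightarrow> f x = {x}"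
  unfolding Ref_def by (elim conjE) assumption
lemma Ref_D4: "Ref f \<Longrightarrow> \<forall>z\<in>K. (\<exists>s. (z,s) \<in> R) \<longrightarrow> f z = {} \<and> lin_ext f (B z) = {}"
  unfolding Ref_def by (elim conjE) assumption

lemma Ref_out: "Ref f \<Longrightarrow> x \<notin> K \<Longrightarrow> f x = {}" using Ref_D1 by simp
lemma Ref_in: "Ref f \<Longrightarrow> x \<in> K \<Longrightarrow> f x \<subseteq> {y\<in>K. crit y \<and> g y = g x}" using Ref_D2 by simp
lemma Ref_crit: "Ref f \<Longrightarrow> x \<in> K \<Longrightarrow> crit x \<Longrightarrow> f x = {x}" using Ref_D3 by simp
lemma Ref_zero: "Ref f \<Longrightarrow> (z,s) \<in> R \<Longrightarrow> f z = {}"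
proof -
  assume a: "Ref f" "(z,s) \<in> R"
  then have "z \<in> K" using RK by simp
  then show ?thesis using Ref_D4[OF a(1)] a(2) by auto
qed
lemma Ref_lin: "Ref f \<Longrightarrow> (z,s) \<in> R \<Longrightarrow> lin_ext f (B z) = {}"
proof -
  assume a: "Ref f" "(z,s) \<in> R"
  then have "z \<in> K" using RK by simp
  then show ?thesis using Ref_D4[OF a(1)] a(2) by auto
qed

lemma Ref_uniq:
  assumes "Ref f" "Ref h" shows "f x = h x"
proof (induction x rule: measure_induct_rule[of lvl])
  case (less x)
  show ?case
  proof (cases "x \<in> K")
    case False then show ?thesis using assms unfolding Ref_def by auto
  next
    case xK: True
    consider "crit x" | "\<exists>s. (x,s) \<in> R" | "\<exists>z. (z,x) \<in> R" using cover[OF xK] by blast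
    then show ?thesis
    proof cases
      case 1 then show ?thesis using assms xK unfolding Ref_def by auto
    next
      case 2 then show ?thesis using assms xK unfolding Ref_def by auto
    next
      case 3
      then obtain z where z: "(z,x) \<in> R" by blast
      have zK: "z \<in> K" using RK z by blast
      have "f x = lin_ext f (B z - {x})" using assms(1) z zK unfolding Ref_def by (intro solved_eq) auto
      also have "\<dots> = lin_ext h (B z - {x})"
        by (rule lin_ext_cong) (use less Rlvl z in auto)
      also have "\<dots> = h x" using assms(2) z zK unfolding Ref_def by (intro solved_eq[symmetric]) auto
      finally show ?thesis .
    qed
  qed
qed

lemma Ref_The: "Ref (THE f. Ref f)"
proof -
  have "\<exists>!f. Ref f" using Ref_ex Ref_uniq by blast
  then show ?thesis by (rule theI')
qed

lemma Ref_sub: "Ref f \<Longrightarrow> f x \<subseteq> K"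
  unfolding Ref_def by (cases "x \<in> K") auto

lemma Ref_fin: "Ref f \<Longrightarrow> finite (f x)"
  using Ref_sub finK finite_subset by blast

lemma H:
  assumes "Ref f" "D \<subseteq> K" "finite D" "\<And>y. y \<in> D \<Longrightarrow> lin_ext f (lin_ext B (f y)) = lin_ext f (B y)"
  shows "lin_ext f (lin_ext B (lin_ext f D)) = lin_ext f (lin_ext B D)"
proof -
  have "lin_ext B (lin_ext f D) = lin_ext (\<lambda>y. lin_ext B (f y)) D"
    using assms Ref_fin by (intro lin_ext_comp) auto
  then have "lin_ext f (lin_ext B (lin_ext f D)) = lin_ext f (lin_ext (\<lambda>y. lin_ext B (f y)) D)" by simp
  also have "\<dots> = lin_ext (\<lambda>y. lin_ext f (lin_ext B (f y))) D"
  proof (rule lin_ext_comp[OF assms(3)])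
    fix y assume "y \<in> D"
    show "finite (lin_ext B (f y))"
      using Ref_fin[OF assms(1)] Ref_sub[OF assms(1)] finB by (intro lin_ext_finite) auto
  qed
  also have "\<dots> = lin_ext (\<lambda>y. lin_ext f (B y)) D"
    using assms(4) by (rule lin_ext_cong)
  also have "\<dots> = lin_ext f (lin_ext B D)"
    using assms finB by (intro lin_ext_comp[symmetric]) auto
  finally show ?thesis .
qed

lemma key:
  assumes "Ref f" shows "x \<in> K \<Longrightarrow> lin_ext f (lin_ext B (f x)) = lin_ext f (B x)"
proof (induction x rule: measure_induct_rule[of lvl])
  case (less x)
  consider "crit x" | "\<exists>s. (x,s) \<in> R" | "\<exists>z. (z,x) \<in> R" using cover[OF less.prems] by blast
  then show ?case
  proof cases
    case 1 then show ?thesis using assms less.prems unfolding Ref_def by auto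
  next
    case 2 then show ?thesis using assms less.prems unfolding Ref_def by auto
  next
    case 3
    then obtain z where z: "(z,x) \<in> R" by blast
    have zK: "z \<in> K" using RK z by blast
    define D where "D = B z - {x}"
    have DK: "D \<subseteq> K" "finite D" using BK zK finB unfolding D_def by auto
    have fx: "f x = lin_ext f D" using assms z zK unfolding Ref_def D_def by (intro solved_eq) auto
    have "lin_ext B (B z) = sd (B x) (lin_ext B D)"
      unfolding D_def using z Rs finB zK by (intro lin_ext_remove) auto
    then have BD: "lin_ext B D = B x" using BB[OF zK] by blast
    have "lin_ext f (lin_ext B (f x)) = lin_ext f (lin_ext B D)"
      unfolding fx
    proof (rule H[OF assms DK])
      fix y assume "y \<in> D"
      then show "lin_ext f (lin_ext B (f y)) = lin_ext f (B y)"
        using less.IH Rlvl z DK unfolding D_def by blast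
    qed
    then show ?thesis using BD by simp
  qed
qed

lemma main:
  assumes "Ref f" "c \<subseteq> K"
  shows "lin_ext f (lin_ext B (lin_ext f (lin_ext B c))) = {}"
proof -
  have fc: "finite c" using assms finK finite_subset by blast
  define E where "E = lin_ext B c"
  have EK: "E \<subseteq> K" "finite E" unfolding E_def using lin_ext_sub[of B c] BK assms fc finB
    by (auto intro!: lin_ext_finite)
  have "lin_ext f (lin_ext B (lin_ext f E)) = lin_ext f (lin_ext B E)"
    using H[OF assms(1) EK] key[OF assms(1)] EK by blast
  also have "lin_ext B E = lin_ext (\<lambda>x. lin_ext B (B x)) c"
    unfolding E_def using fc assms finB by (intro lin_ext_comp) auto
  also have "\<dots> = {}"
  proof (rule lin_ext_zero)
    fix x assume "x \<in> c"
    then have "x \<in> K" using assms(2) by blast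
    then show "lin_ext B (B x) = {}" by (rule BB)
  qed
  finally show ?thesis unfolding E_def by simp
qed

end



definition mlvl :: "'v set set list \<Rightarrow> 'v set \<Rightarrow> nat" where
  "mlvl Ks \<sigma> = (LEAST i. \<sigma> \<in> Ks ! i)"

lemma sc_face: "simplicial_complex K \<Longrightarrow> s \<in> K \<Longrightarrow> t \<subseteq> s \<Longrightarrow> t \<noteq> {} \<Longrightarrow> t \<in> K"
  unfolding simplicial_complex_def by blast
lemma sc_fin: "simplicial_complex K \<Longrightarrow> s \<in> K \<Longrightarrow> finite s"
  unfolding simplicial_complex_def by blast
lemma sc_ne: "simplicial_complex K \<Longrightarrow> s \<in> K \<Longrightarrow> s \<noteq> {}"
  unfolding simplicial_complex_def by blast
lemma sc_finK: "simplicial_complex K \<Longrightarrow> finite K"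
  unfolding simplicial_complex_def by blast

lemma free_card:
  assumes sc: "simplicial_complex K'" and fp: "free_pair K' \<sigma> \<tau>"
  shows "card \<tau> = card \<sigma> + 1"
proof -
  have st: "\<sigma> \<subset> \<tau>" "\<tau> \<in> K'" using fp by (auto simp: free_pair_def)
  have ft: "finite \<tau>" using sc st(2) by (rule sc_fin)
  obtain x where x: "x \<in> \<tau>" "x \<notin> \<sigma>" using st by blast
  have "insert x \<sigma> \<subseteq> \<tau>" using st x by blast
  then have "insert x \<sigma> \<in> K'" by (intro sc_face[OF sc st(2)]) auto
  then have "insert x \<sigma> = \<sigma> \<or> insert x \<sigma> = \<tau>" using fp unfolding free_pair_def by blast
  then have e: "\<tau> = insert x \<sigma>" using x by blast
  have "finite \<sigma>" using st ft finite_subset by blast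
  then show ?thesis using e x by simp
qed

lemma comb:
  assumes "finite hi" "lo \<subseteq> hi" "card hi = card lo + 2"
  shows "card {t. lo \<subset> t \<and> t \<subset> hi \<and> card t = card lo + 1} = 2"
proof -
  have flo: "finite lo" using assms finite_subset by blast
  have e: "{t. lo \<subset> t \<and> t \<subset> hi \<and> card t = card lo + 1} = (\<lambda>x. insert x lo) ` (hi - lo)"
  proof
    show "{t. lo \<subset> t \<and> t \<subset> hi \<and> card t = card lo + 1} \<subseteq> (\<lambda>x. insert x lo) ` (hi - lo)"
    proof
      fix t assume t: "t \<in> {t. lo \<subset> t \<and> t \<subset> hi \<and> card t = card lo + 1}"
      then have ft: "finite t" using assms finite_subset by blast
      have lt: "lo \<subseteq> t" using t by auto
      have "card (t - lo) = card t - card lo" by (rule card_Diff_subset[OF flo lt])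
      then have "card (t - lo) = 1" using t by simp
      then obtain x where x: "t - lo = {x}" using card_1_singletonE by blast
      then have "t = insert x lo" using t by blast
      moreover have "x \<in> hi - lo" using x t by blast
      ultimately show "t \<in> (\<lambda>x. insert x lo) ` (hi - lo)" by blast
    qed
  next
    show "(\<lambda>x. insert x lo) ` (hi - lo) \<subseteq> {t. lo \<subset> t \<and> t \<subset> hi \<and> card t = card lo + 1}"
    proof
      fix t assume "t \<in> (\<lambda>x. insert x lo) ` (hi - lo)"
      then obtain x where x: "x \<in> hi" "x \<notin> lo" "t = insert x lo" by blast
      have c: "card t = card lo + 1" using x flo by simp
      have "t \<subseteq> hi" using x assms by blast
      moreover have "t \<noteq> hi" using c assms by auto
      ultimately show "t \<in> {t. lo \<subset> t \<and> t \<subset> hi \<and> card t = card lo + 1}" using x c by blast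
    qed
  qed
  have "card ((\<lambda>x. insert x lo) ` (hi - lo)) = card (hi - lo)"
    by (rule card_image) (auto simp: inj_on_def)
  also have "\<dots> = 2" using assms by (simp add: card_Diff_subset flo)
  finally show ?thesis using e by simp
qed

lemma bnd_bnd:
  assumes sc: "simplicial_complex K" and sK: "\<sigma> \<in> K"
  shows "lin_ext (bnd K) (bnd K \<sigma>) = {}"
proof -
  have fs: "finite \<sigma>" using sc sK by (rule sc_fin)
  have "even (card {\<tau> \<in> bnd K \<sigma>. \<rho> \<in> bnd K \<tau>})" for \<rho>
  proof (cases "{\<tau> \<in> bnd K \<sigma>. \<rho> \<in> bnd K \<tau>} = {}")
    case True then show ?thesis by (metis card.empty even_zero)
  next
    case False
    then obtain t0 where t0: "t0 \<in> bnd K \<sigma>" "\<rho> \<in> bnd K t0" by blast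
    then have r: "\<rho> \<in> K" "\<rho> \<subset> t0" "t0 \<subset> \<sigma>" "card \<rho> + 1 = card t0" "card t0 + 1 = card \<sigma>"
      by (auto simp: bnd_def)
    have "{\<tau> \<in> bnd K \<sigma>. \<rho> \<in> bnd K \<tau>} = {t. \<rho> \<subset> t \<and> t \<subset> \<sigma> \<and> card t = card \<rho> + 1}"
    proof (rule set_eqI, rule iffI)
      fix t assume "t \<in> {\<tau> \<in> bnd K \<sigma>. \<rho> \<in> bnd K \<tau>}"
      then show "t \<in> {t. \<rho> \<subset> t \<and> t \<subset> \<sigma> \<and> card t = card \<rho> + 1}" by (auto simp: bnd_def)
    next
      fix t assume t: "t \<in> {t. \<rho> \<subset> t \<and> t \<subset> \<sigma> \<and> card t = card \<rho> + 1}"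
      then have "t \<noteq> {}" by blast
      then have "t \<in> K" using t by (intro sc_face[OF sc sK]) auto
      then show "t \<in> {\<tau> \<in> bnd K \<sigma>. \<rho> \<in> bnd K \<tau>}" using t r by (auto simp: bnd_def)
    qed
    moreover have "card {t. \<rho> \<subset> t \<and> t \<subset> \<sigma> \<and> card t = card \<rho> + 1} = 2"
      using r fs by (intro comb) auto
    ultimately show ?thesis by simp
  qed
  then show ?thesis by (simp add: lin_ext_def)
qed

lemma cobnd_cobnd:
  assumes sc: "simplicial_complex K" and sK: "\<sigma> \<in> K"
  shows "lin_ext (cobnd K) (cobnd K \<sigma>) = {}"
proof -
  have "even (card {\<tau> \<in> cobnd K \<sigma>. \<rho> \<in> cobnd K \<tau>})" for \<rho>
  proof (cases "{\<tau> \<in> cobnd K \<sigma>. \<rho> \<in> cobnd K \<tau>} = {}")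
    case True then show ?thesis by (metis card.empty even_zero)
  next
    case False
    then obtain t0 where t0: "t0 \<in> cobnd K \<sigma>" "\<rho> \<in> cobnd K t0" by blast
    then have r: "\<rho> \<in> K" "\<sigma> \<subset> t0" "t0 \<subset> \<rho>" "card t0 = card \<sigma> + 1" "card \<rho> = card t0 + 1"
      by (auto simp: cobnd_def)
    have fr: "finite \<rho>" using sc r(1) by (rule sc_fin)
    have "{\<tau> \<in> cobnd K \<sigma>. \<rho> \<in> cobnd K \<tau>} = {t. \<sigma> \<subset> t \<and> t \<subset> \<rho> \<and> card t = card \<sigma> + 1}"
    proof (rule set_eqI, rule iffI)
      fix t assume "t \<in> {\<tau> \<in> cobnd K \<sigma>. \<rho> \<in> cobnd K \<tau>}"
      then show "t \<in> {t. \<sigma> \<subset> t \<and> t \<subset> \<rho> \<and> card t = card \<sigma> + 1}" by (auto simp: cobnd_def)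
    next
      fix t assume t: "t \<in> {t. \<sigma> \<subset> t \<and> t \<subset> \<rho> \<and> card t = card \<sigma> + 1}"
      then have "t \<noteq> {}" by blast
      then have "t \<in> K" using t by (intro sc_face[OF sc r(1)]) auto
      then show "t \<in> {\<tau> \<in> cobnd K \<sigma>. \<rho> \<in> cobnd K \<tau>}" using t r by (auto simp: cobnd_def)
    qed
    moreover have "card {t. \<sigma> \<subset> t \<and> t \<subset> \<rho> \<and> card t = card \<sigma> + 1} = 2"
      using r fr by (intro comb) auto
    ultimately show ?thesis by simp
  qed
  then show ?thesis by (simp add: lin_ext_def)
qed


locale mseq =
  fixes K :: "'v set set" and Ks :: "'v set set list"
  assumes ms: "morse_sequence K Ks"
begin

abbreviation "n \<equiv> length Ks"

lemma ne: "Ks \<noteq> []" and K0: "Ks ! 0 = {}" and lastK: "Ks ! (n - 1) = K"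
  using ms unfolding morse_sequence_def by (auto simp: last_conv_nth)

lemma npos: "0 < n" using ne by simp

lemma step: "0 < i \<Longrightarrow> i < n \<Longrightarrow>
   (\<exists>\<sigma> \<tau>. elem_expansion (Ks ! i) (Ks ! (i - 1)) \<sigma> \<tau>) \<or> (\<exists>\<nu>. elem_filling (Ks ! i) (Ks ! (i - 1)) \<nu>)"
  using ms unfolding morse_sequence_def by blast

lemma sc: "i < n \<Longrightarrow> simplicial_complex (Ks ! i)"
proof (cases "i = 0")
  case True then show ?thesis using K0 by (simp add: simplicial_complex_def)
next
  case False
  assume "i < n"
  then have "(\<exists>\<sigma> \<tau>. elem_expansion (Ks ! i) (Ks ! (i - 1)) \<sigma> \<tau>) \<or> (\<exists>\<nu>. elem_filling (Ks ! i) (Ks ! (i - 1)) \<nu>)"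
    using step False by simp
  then show ?thesis unfolding elem_expansion_def elem_filling_def by (elim disjE exE conjE)
qed

lemma mono1: "0 < i \<Longrightarrow> i < n \<Longrightarrow> Ks ! (i - 1) \<subseteq> Ks ! i"
proof -
  assume "0 < i" "i < n"
  then have "(\<exists>\<sigma> \<tau>. elem_expansion (Ks ! i) (Ks ! (i - 1)) \<sigma> \<tau>) \<or> (\<exists>\<nu>. elem_filling (Ks ! i) (Ks ! (i - 1)) \<nu>)"
    using step by simp
  then show ?thesis unfolding elem_expansion_def elem_filling_def by auto
qed

lemma mono: "i \<le> j \<Longrightarrow> j < n \<Longrightarrow> Ks ! i \<subseteq> Ks ! j"
proof (induction j)
  case 0 then show ?case by simp
next
  case (Suc j)
  show ?case
  proof (cases "i = Suc j")
    case True then show ?thesis by simp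
  next
    case False
    then have "Ks ! i \<subseteq> Ks ! j" using Suc by simp
    also have "Ks ! j \<subseteq> Ks ! (Suc j)" using mono1[of "Suc j"] Suc.prems by simp
    finally show ?thesis .
  qed
qed

lemma subK: "i < n \<Longrightarrow> Ks ! i \<subseteq> K"
  using mono[of i "n - 1"] lastK by simp

lemma scK: "simplicial_complex K"
  using sc[of "n - 1"] lastK npos by simp

lemma lvl_props: assumes "\<sigma> \<in> K"
  shows "\<sigma> \<in> Ks ! mlvl Ks \<sigma>" "mlvl Ks \<sigma> < n" "0 < mlvl Ks \<sigma>"
proof -
  have a: "\<sigma> \<in> Ks ! (n - 1)" using assms lastK by simp
  show b: "\<sigma> \<in> Ks ! mlvl Ks \<sigma>" unfolding mlvl_def by (rule LeastI[where P="\<lambda>i. \<sigma> \<in> Ks ! i", OF a])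
  have "mlvl Ks \<sigma> \<le> n - 1" unfolding mlvl_def by (rule Least_le[where P="\<lambda>i. \<sigma> \<in> Ks ! i", OF a])
  then show "mlvl Ks \<sigma> < n" using npos by linarith
  show "0 < mlvl Ks \<sigma>" using b K0 by (cases "mlvl Ks \<sigma>") auto
qed

lemma mem_iff: "\<sigma> \<in> K \<Longrightarrow> j < n \<Longrightarrow> \<sigma> \<in> Ks ! j \<longleftrightarrow> mlvl Ks \<sigma> \<le> j"
proof
  assume "\<sigma> \<in> Ks ! j" then show "mlvl Ks \<sigma> \<le> j" unfolding mlvl_def by (rule Least_le)
next
  assume "\<sigma> \<in> K" "j < n" "mlvl Ks \<sigma> \<le> j"
  then show "\<sigma> \<in> Ks ! j" using mono[of "mlvl Ks \<sigma>" j] lvl_props(1)[of \<sigma>] by blast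
qed

lemma added: "0 < i \<Longrightarrow> i < n \<Longrightarrow> \<sigma> \<in> Ks ! i \<Longrightarrow> \<sigma> \<notin> Ks ! (i - 1) \<Longrightarrow> mlvl Ks \<sigma> = i"
proof -
  assume a: "0 < i" "i < n" "\<sigma> \<in> Ks ! i" "\<sigma> \<notin> Ks ! (i - 1)"
  have sK: "\<sigma> \<in> K" using a subK by blast
  have "mlvl Ks \<sigma> \<le> i" using mem_iff[OF sK a(2)] a(3) by simp
  moreover have "\<not> mlvl Ks \<sigma> \<le> i - 1" using mem_iff[OF sK, of "i - 1"] a by simp
  ultimately show ?thesis by simp
qed

lemma rp_info:
  assumes "regular_pair Ks \<sigma> \<tau>"
  shows "0 < mlvl Ks \<sigma>" "mlvl Ks \<sigma> < n" "mlvl Ks \<tau> = mlvl Ks \<sigma>"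
    "elem_expansion (Ks ! mlvl Ks \<sigma>) (Ks ! (mlvl Ks \<sigma> - 1)) \<sigma> \<tau>"
proof -
  obtain i where i: "0 < i" "i < n" "elem_expansion (Ks ! i) (Ks ! (i - 1)) \<sigma> \<tau>"
    using assms unfolding regular_pair_def by blast
  have fp: "free_pair (Ks ! i) \<sigma> \<tau>" "Ks ! (i - 1) = Ks ! i - {\<sigma>, \<tau>}"
    using i(3) unfolding elem_expansion_def by simp_all
  have m: "\<sigma> \<in> Ks ! i" "\<tau> \<in> Ks ! i" using fp(1) unfolding free_pair_def by simp_all
  have "mlvl Ks \<sigma> = i" using added[OF i(1,2) m(1)] fp(2) by blast
  moreover have "mlvl Ks \<tau> = i" using added[OF i(1,2) m(2)] fp(2) by blast
  ultimately show "0 < mlvl Ks \<sigma>" "mlvl Ks \<sigma> < n" "mlvl Ks \<tau> = mlvl Ks \<sigma>"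
    "elem_expansion (Ks ! mlvl Ks \<sigma>) (Ks ! (mlvl Ks \<sigma> - 1)) \<sigma> \<tau>" using i by simp_all
qed

lemma crit_info:
  assumes "critical Ks \<nu>"
  shows "0 < mlvl Ks \<nu>" "mlvl Ks \<nu> < n" "elem_filling (Ks ! mlvl Ks \<nu>) (Ks ! (mlvl Ks \<nu> - 1)) \<nu>"
proof -
  obtain i where i: "0 < i" "i < n" "elem_filling (Ks ! i) (Ks ! (i - 1)) \<nu>"
    using assms unfolding critical_def by blast
  have f: "\<nu> \<in> Ks ! i" "Ks ! (i - 1) = Ks ! i - {\<nu>}"
    using i(3) unfolding elem_filling_def by simp_all
  have "mlvl Ks \<nu> = i" using added[OF i(1,2) f(1)] f(2) by blast
  then show "0 < mlvl Ks \<nu>" "mlvl Ks \<nu> < n" "elem_filling (Ks ! mlvl Ks \<nu>) (Ks ! (mlvl Ks \<nu> - 1)) \<nu>"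
    using i by simp_all
qed

lemma crit_not_rp:
  assumes c: "critical Ks \<nu>" and r: "regular_pair Ks \<sigma> \<tau>"
  shows "\<nu> \<noteq> \<sigma> \<and> \<nu> \<noteq> \<tau>"
proof (rule ccontr)
  assume a: "\<not> (\<nu> \<noteq> \<sigma> \<and> \<nu> \<noteq> \<tau>)"
  have lv: "mlvl Ks \<nu> = mlvl Ks \<sigma>" using a rp_info(3)[OF r] by auto
  have f: "Ks ! (mlvl Ks \<sigma> - 1) = Ks ! mlvl Ks \<sigma> - {\<nu>}"
    using crit_info(3)[OF c] lv unfolding elem_filling_def by simp
  have e: "Ks ! (mlvl Ks \<sigma> - 1) = Ks ! mlvl Ks \<sigma> - {\<sigma>, \<tau>}" "free_pair (Ks ! mlvl Ks \<sigma>) \<sigma> \<tau>"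
    using rp_info(4)[OF r] unfolding elem_expansion_def by simp_all
  have m: "\<sigma> \<in> Ks ! mlvl Ks \<sigma>" "\<tau> \<in> Ks ! mlvl Ks \<sigma>" "\<sigma> \<noteq> \<tau>"
    using e(2) unfolding free_pair_def by auto
  show False
  proof (cases "\<nu> = \<sigma>")
    case True
    then have "\<tau> \<in> Ks ! (mlvl Ks \<sigma> - 1)" using f m by simp
    then show False using e(1) by simp
  next
    case False
    then have "\<nu> = \<tau>" using a by simp
    then have "\<sigma> \<in> Ks ! (mlvl Ks \<sigma> - 1)" using f m by simp
    then show False using e(1) by simp
  qed
qed

lemma rp_uniq:
  assumes r1: "regular_pair Ks \<sigma> \<tau>" and r2: "regular_pair Ks \<sigma>' \<tau>'"
    and sh: "\<sigma> = \<sigma>' \<or> \<tau> = \<tau>' \<or> \<sigma> = \<tau>' \<or> \<tau> = \<sigma>'"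
  shows "\<sigma> = \<sigma>' \<and> \<tau> = \<tau>'"
proof -
  have lv: "mlvl Ks \<sigma>' = mlvl Ks \<sigma>" using sh rp_info(3)[OF r1] rp_info(3)[OF r2] by auto
  define i where "i = mlvl Ks \<sigma>"
  have e1: "Ks ! (i - 1) = Ks ! i - {\<sigma>, \<tau>}" "free_pair (Ks ! i) \<sigma> \<tau>"
    using rp_info(4)[OF r1] unfolding elem_expansion_def i_def by simp_all
  have e2: "Ks ! (i - 1) = Ks ! i - {\<sigma>', \<tau>'}" "free_pair (Ks ! i) \<sigma>' \<tau>'"
    using rp_info(4)[OF r2] lv unfolding elem_expansion_def i_def by simp_all
  have m: "\<sigma> \<in> Ks ! i" "\<tau> \<in> Ks ! i" "\<sigma> \<subset> \<tau>" "\<sigma>' \<in> Ks ! i" "\<tau>' \<in> Ks ! i" "\<sigma>' \<subset> \<tau>'"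
    using e1(2) e2(2) unfolding free_pair_def by auto
  have "{\<sigma>, \<tau>} = {\<sigma>', \<tau>'}"
  proof -
    have d: "Ks ! i - {\<sigma>, \<tau>} = Ks ! i - {\<sigma>', \<tau>'}" using e1(1) e2(1) by simp
    have "{\<sigma>, \<tau>} = Ks ! i - (Ks ! i - {\<sigma>, \<tau>})" using m by auto
    also have "\<dots> = Ks ! i - (Ks ! i - {\<sigma>', \<tau>'})" using d by simp
    also have "\<dots> = {\<sigma>', \<tau>'}" using m by auto
    finally show ?thesis .
  qed
  then have "(\<sigma> = \<sigma>' \<and> \<tau> = \<tau>') \<or> (\<sigma> = \<tau>' \<and> \<tau> = \<sigma>')" by (simp add: doubleton_eq_iff)
  then show ?thesis using m by auto
qed

lemma cover: "\<sigma> \<in> K \<Longrightarrow> critical Ks \<sigma> \<or> (\<exists>\<tau>. regular_pair Ks \<sigma> \<tau>) \<or> (\<exists>\<sigma>'. regular_pair Ks \<sigma>' \<sigma>)"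
proof -
  assume sK: "\<sigma> \<in> K"
  define i where "i = mlvl Ks \<sigma>"
  have i: "0 < i" "i < n" "\<sigma> \<in> Ks ! i" using lvl_props[OF sK] unfolding i_def by auto
  have ni: "\<sigma> \<notin> Ks ! (i - 1)" using mem_iff[OF sK, of "i - 1"] i unfolding i_def by simp
  from step[OF i(1,2)] show ?thesis
  proof (elim disjE exE)
    fix a b assume e: "elem_expansion (Ks ! i) (Ks ! (i - 1)) a b"
    then have "regular_pair Ks a b" unfolding regular_pair_def using i by blast
    moreover have "Ks ! (i - 1) = Ks ! i - {a, b}" using e unfolding elem_expansion_def by simp
    then have "\<sigma> = a \<or> \<sigma> = b" using i(3) ni by auto
    ultimately show ?thesis by blast
  next
    fix v assume e: "elem_filling (Ks ! i) (Ks ! (i - 1)) v"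
    then have "critical Ks v" unfolding critical_def using i by blast
    moreover have "Ks ! (i - 1) = Ks ! i - {v}" using e unfolding elem_filling_def by simp
    then have "\<sigma> = v" using i(3) ni by auto
    ultimately show ?thesis by blast
  qed
qed

lemma rp_card: "regular_pair Ks \<sigma> \<tau> \<Longrightarrow> card \<tau> = card \<sigma> + 1"
proof -
  assume r: "regular_pair Ks \<sigma> \<tau>"
  have "simplicial_complex (Ks ! mlvl Ks \<sigma>)" "free_pair (Ks ! mlvl Ks \<sigma>) \<sigma> \<tau>"
    using rp_info(4)[OF r] unfolding elem_expansion_def by simp_all
  then show ?thesis by (rule free_card)
qed

lemma rp_K: "regular_pair Ks \<sigma> \<tau> \<Longrightarrow> \<sigma> \<in> K \<and> \<tau> \<in> K \<and> \<sigma> \<subset> \<tau>"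
proof -
  assume r: "regular_pair Ks \<sigma> \<tau>"
  have "free_pair (Ks ! mlvl Ks \<sigma>) \<sigma> \<tau>"
    using rp_info(4)[OF r] unfolding elem_expansion_def by simp_all
  then have "\<sigma> \<in> Ks ! mlvl Ks \<sigma>" "\<tau> \<in> Ks ! mlvl Ks \<sigma>" "\<sigma> \<subset> \<tau>" unfolding free_pair_def by simp_all
  then show ?thesis using subK[OF rp_info(2)[OF r]] by blast
qed

lemma ref_abs: "mabs K (bnd K) (critical Ks) {(\<tau>, \<sigma>). regular_pair Ks \<sigma> \<tau>} (mlvl Ks) card"
proof (rule mabs.intro)
  show "finite K" using scK by (rule sc_finK)
next
  fix x show "bnd K x \<subseteq> K" by (auto simp: bnd_def)
next
  fix x assume "x \<in> K" then show "lin_ext (bnd K) (bnd K x) = {}" using scK bnd_bnd by blast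
next
  fix x assume "x \<in> K"
  then show "critical Ks x \<or> (\<exists>s. (x, s) \<in> {(\<tau>, \<sigma>). regular_pair Ks \<sigma> \<tau>}) \<or> (\<exists>z. (z, x) \<in> {(\<tau>, \<sigma>). regular_pair Ks \<sigma> \<tau>})"
    using cover by auto
next
  fix z s assume "(z, s) \<in> {(\<tau>, \<sigma>). regular_pair Ks \<sigma> \<tau>}"
  then show "z \<in> K \<and> s \<in> K" using rp_K by auto
next
  fix z s assume "(z, s) \<in> {(\<tau>, \<sigma>). regular_pair Ks \<sigma> \<tau>}"
  then have r: "regular_pair Ks s z" by simp
  then show "s \<in> bnd K z" using rp_K[OF r] rp_card[OF r] by (simp add: bnd_def)
next
  fix z s y assume "(z, s) \<in> {(\<tau>, \<sigma>). regular_pair Ks \<sigma> \<tau>}" and y: "y \<in> bnd K z" "y \<noteq> s"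
  then have r: "regular_pair Ks s z" by simp
  define i where "i = mlvl Ks s"
  have e: "Ks ! (i - 1) = Ks ! i - {s, z}" "free_pair (Ks ! i) s z" "simplicial_complex (Ks ! i)"
    using rp_info(4)[OF r] unfolding elem_expansion_def i_def by simp_all
  have zi: "z \<in> Ks ! i" using e(2) unfolding free_pair_def by simp
  have yz: "y \<subset> z" "card y + 1 = card z" using y by (auto simp: bnd_def)
  have "s \<noteq> {}" using sc_ne[OF e(3)] e(2) unfolding free_pair_def by simp
  moreover have "finite s" using sc_fin[OF e(3)] e(2) unfolding free_pair_def by simp
  ultimately have "card s > 0" by (simp add: card_gt_0_iff)
  then have "card y > 0" using yz rp_card[OF r] by simp
  then have "y \<noteq> {}" by auto
  then have "y \<in> Ks ! i" using yz by (intro sc_face[OF e(3) zi]) auto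
  then have "y \<in> Ks ! (i - 1)" using e(1) y yz by auto
  moreover have "y \<in> K" using y by (simp add: bnd_def)
  ultimately have "mlvl Ks y \<le> i - 1" using mem_iff rp_info(2)[OF r] unfolding i_def by simp
  then show "mlvl Ks y < mlvl Ks s" using rp_info(1)[OF r] unfolding i_def by simp
next
  fix z s y assume "(z, s) \<in> {(\<tau>, \<sigma>). regular_pair Ks \<sigma> \<tau>}" and y: "y \<in> bnd K z"
  then have r: "regular_pair Ks s z" by simp
  show "card y = card s" using y rp_card[OF r] by (simp add: bnd_def)
next
  fix z s assume "(z, s) \<in> {(\<tau>, \<sigma>). regular_pair Ks \<sigma> \<tau>}"
  then have r: "regular_pair Ks s z" by simp
  show "\<not> critical Ks z \<and> \<not> critical Ks s" using crit_not_rp r by blast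
next
  fix z s assume "(z, s) \<in> {(\<tau>, \<sigma>). regular_pair Ks \<sigma> \<tau>}"
  then have r: "regular_pair Ks s z" by simp
  have "s \<subset> z" using rp_K[OF r] by simp
  then show "z \<noteq> s" by blast
next
  fix z s z' s' assume "(z, s) \<in> {(\<tau>, \<sigma>). regular_pair Ks \<sigma> \<tau>}" "(z', s') \<in> {(\<tau>, \<sigma>). regular_pair Ks \<sigma> \<tau>}"
    "z = z' \<or> s = s' \<or> z = s' \<or> s = z'"
  then have r: "regular_pair Ks s z" "regular_pair Ks s' z'" "s = s' \<or> z = z' \<or> s = z' \<or> z = s'" by auto
  have "s = s' \<and> z = z'" by (rule rp_uniq[OF r])
  then show "z = z' \<and> s = s'" by simp
qed

lemma coref_abs: "mabs K (cobnd K) (critical Ks) {(\<sigma>, \<tau>). regular_pair Ks \<sigma> \<tau>} (\<lambda>x. n - mlvl Ks x) card"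
proof (rule mabs.intro)
  show "finite K" using scK by (rule sc_finK)
next
  fix x show "cobnd K x \<subseteq> K" by (auto simp: cobnd_def)
next
  fix x assume "x \<in> K" then show "lin_ext (cobnd K) (cobnd K x) = {}" using scK cobnd_cobnd by blast
next
  fix x assume "x \<in> K"
  then show "critical Ks x \<or> (\<exists>s. (x, s) \<in> {(\<sigma>, \<tau>). regular_pair Ks \<sigma> \<tau>}) \<or> (\<exists>z. (z, x) \<in> {(\<sigma>, \<tau>). regular_pair Ks \<sigma> \<tau>})"
    using cover by auto
next
  fix z s assume "(z, s) \<in> {(\<sigma>, \<tau>). regular_pair Ks \<sigma> \<tau>}"
  then have r: "regular_pair Ks z s" by simp
  show "z \<in> K \<and> s \<in> K" using rp_K[OF r] by simp
next
  fix z s assume "(z, s) \<in> {(\<sigma>, \<tau>). regular_pair Ks \<sigma> \<tau>}"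
  then have r: "regular_pair Ks z s" by simp
  then show "s \<in> cobnd K z" using rp_K[OF r] rp_card[OF r] by (simp add: cobnd_def)
next
  fix z s y assume "(z, s) \<in> {(\<sigma>, \<tau>). regular_pair Ks \<sigma> \<tau>}" and y: "y \<in> cobnd K z" "y \<noteq> s"
  then have r: "regular_pair Ks z s" by simp
  define i where "i = mlvl Ks z"
  have e: "free_pair (Ks ! i) z s"
    using rp_info(4)[OF r] unfolding elem_expansion_def i_def by simp_all
  have yz: "z \<subset> y" "y \<in> K" using y by (auto simp: cobnd_def)
  have "y \<notin> Ks ! i"
  proof
    assume "y \<in> Ks ! i"
    then have "y = z \<or> y = s" using e yz unfolding free_pair_def by blast
    then show False using yz y by blast
  qed
  then have "\<not> mlvl Ks y \<le> i" using mem_iff[OF yz(2)] rp_info(2)[OF r] unfolding i_def by simp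
  moreover have "mlvl Ks y < n" using lvl_props(2)[OF yz(2)] .
  moreover have "mlvl Ks s = i" using rp_info(3)[OF r] unfolding i_def by simp
  ultimately show "n - mlvl Ks y < n - mlvl Ks s" by simp
next
  fix z s y assume "(z, s) \<in> {(\<sigma>, \<tau>). regular_pair Ks \<sigma> \<tau>}" and y: "y \<in> cobnd K z"
  then have r: "regular_pair Ks z s" by simp
  show "card y = card s" using y rp_card[OF r] by (simp add: cobnd_def)
next
  fix z s assume "(z, s) \<in> {(\<sigma>, \<tau>). regular_pair Ks \<sigma> \<tau>}"
  then have r: "regular_pair Ks z s" by simp
  show "\<not> critical Ks z \<and> \<not> critical Ks s" using crit_not_rp r by blast
next
  fix z s assume "(z, s) \<in> {(\<sigma>, \<tau>). regular_pair Ks \<sigma> \<tau>}"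
  then have r: "regular_pair Ks z s" by simp
  have "z \<subset> s" using rp_K[OF r] by simp
  then show "z \<noteq> s" by blast
next
  fix z s z' s' assume "(z, s) \<in> {(\<sigma>, \<tau>). regular_pair Ks \<sigma> \<tau>}" "(z', s') \<in> {(\<sigma>, \<tau>). regular_pair Ks \<sigma> \<tau>}"
    "z = z' \<or> s = s' \<or> z = s' \<or> s = z'"
  then have r: "regular_pair Ks z s" "regular_pair Ks z' s'" "z = z' \<or> s = s' \<or> z = s' \<or> s = z'" by auto
  show "z = z' \<and> s = s'" by (rule rp_uniq[OF r])
qed

lemma ref_iff: "is_reference_map K Ks f \<longleftrightarrow> mabs.Ref K (bnd K) (critical Ks) {(\<tau>, \<sigma>). regular_pair Ks \<sigma> \<tau>} card f"
proof -
  have cc: "f \<sigma> \<in> crit_chains K Ks (card \<sigma> - 1) \<longleftrightarrow> f \<sigma> \<subseteq> {y\<in>K. critical Ks y \<and> card y = card \<sigma>}"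
    if "\<sigma> \<in> K" for \<sigma>
  proof -
    have "card \<sigma> > 0" using sc_fin[OF scK that] sc_ne[OF scK that] by (simp add: card_gt_0_iff)
    then have "card \<sigma> - 1 + 1 = card \<sigma>" by simp
    then show ?thesis unfolding crit_chains_def simplices_of_dim_def critical_set_def by auto
  qed
  have ur: "upper_regular Ks z \<longleftrightarrow> (\<exists>s. (z, s) \<in> {(\<tau>, \<sigma>). regular_pair Ks \<sigma> \<tau>})" for z
    by (simp add: upper_regular_def)
  show ?thesis unfolding is_reference_map_def mabs.Ref_def[OF ref_abs] ur using cc by auto
qed

lemma coref_iff: "is_coreference_map K Ks f \<longleftrightarrow> mabs.Ref K (cobnd K) (critical Ks) {(\<sigma>, \<tau>). regular_pair Ks \<sigma> \<tau>} card f"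
proof -
  have cc: "f \<sigma> \<in> crit_chains K Ks (card \<sigma> - 1) \<longleftrightarrow> f \<sigma> \<subseteq> {y\<in>K. critical Ks y \<and> card y = card \<sigma>}"
    if "\<sigma> \<in> K" for \<sigma>
  proof -
    have "card \<sigma> > 0" using sc_fin[OF scK that] sc_ne[OF scK that] by (simp add: card_gt_0_iff)
    then have "card \<sigma> - 1 + 1 = card \<sigma>" by simp
    then show ?thesis unfolding crit_chains_def simplices_of_dim_def critical_set_def by auto
  qed
  have lr: "lower_regular Ks z \<longleftrightarrow> (\<exists>s. (z, s) \<in> {(\<sigma>, \<tau>). regular_pair Ks \<sigma> \<tau>})" for z
    by (simp add: lower_regular_def)
  show ?thesis unfolding is_coreference_map_def mabs.Ref_def[OF coref_abs] lr using cc by auto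
qed

lemma final:
  shows "\<forall>p. (\<forall>c \<in> crit_chains K Ks (p + 1). morse_bnd K Ks (morse_bnd K Ks c) = {}) \<and>
             (\<forall>c \<in> crit_chains K Ks p. morse_cobnd K Ks (morse_cobnd K Ks c) = {})"
proof (intro allI conjI ballI)
  fix p c assume "c \<in> crit_chains K Ks (p + 1)"
  then have cK: "c \<subseteq> K" by (auto simp: crit_chains_def simplices_of_dim_def)
  have "reference_map K Ks = (THE f. mabs.Ref K (bnd K) (critical Ks) {(\<tau>, \<sigma>). regular_pair Ks \<sigma> \<tau>} card f)"
    unfolding reference_map_def ref_iff ..
  then have R: "mabs.Ref K (bnd K) (critical Ks) {(\<tau>, \<sigma>). regular_pair Ks \<sigma> \<tau>} card (reference_map K Ks)"
    using mabs.Ref_The[OF ref_abs] by simp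
  show "morse_bnd K Ks (morse_bnd K Ks c) = {}"
    unfolding morse_bnd_def by (rule mabs.main[OF ref_abs R cK])
next
  fix p c assume "c \<in> crit_chains K Ks p"
  then have cK: "c \<subseteq> K" by (auto simp: crit_chains_def simplices_of_dim_def)
  have "coreference_map K Ks = (THE f. mabs.Ref K (cobnd K) (critical Ks) {(\<sigma>, \<tau>). regular_pair Ks \<sigma> \<tau>} card f)"
    unfolding coreference_map_def coref_iff ..
  then have R: "mabs.Ref K (cobnd K) (critical Ks) {(\<sigma>, \<tau>). regular_pair Ks \<sigma> \<tau>} card (coreference_map K Ks)"
    using mabs.Ref_The[OF coref_abs] by simp
  show "morse_cobnd K Ks (morse_cobnd K Ks c) = {}"
    unfolding morse_cobnd_def by (rule mabs.main[OF coref_abs R cK])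
qed

end

theorem proposition7:
  fixes K :: "'v set set" and Ks :: "'v set set list"
  assumes "morse_sequence K Ks"
  shows "\<forall>p. (\<forall>c \<in> crit_chains K Ks (p + 1). morse_bnd K Ks (morse_bnd K Ks c) = {}) \<and>
             (\<forall>c \<in> crit_chains K Ks p. morse_cobnd K Ks (morse_cobnd K Ks c) = {})"
  using mseq.final[OF mseq.intro[OF assms]] .

end
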